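(* Let $m,n\in\mathbb N$, $a\in\mathbb C\setminus\mathbb Z$, $b_1,\dots,b_m\in\mathbb C$, $c_1,\dots,c_m\in\mathbb C\setminus\{0,-1,-2,\dots\}$. Then, as an identity of formal power series in $x=(x_1,\dots,x_m)$, $y=(y_1,\dots,y_n)$, $$\mathrm H_A^{(m,n)}(a,b;c;x,y)=F_A^{(m)}(a,b;c;x)\,J^{(n)}_{-a}(y)+\sum_{k=1}^\infty\sum_{l=1}^k\sum_{\substack{i\in\mathbb Z_{\ge0}^m,\ |i|=k\\ j\in\mathbb Z_{\ge0}^n,\ |j|=l}}\frac{(-1)^{k+l}\,k!\,(k-1)!\,(b)_i}{(l-1)!\,(k-l)!\,(1-a)_l\,(c)_i}\,\frac{x^i}{i!}\frac{y^j}{j!}\,F_A^{(m)}(a+k,b+i;c+i;x)\,J^{(n)}_{-a+l}(y),$$ where $F_A^{(m)}(a+k,b+i;c+i;x)$ means $F_A^{(m)}(a+k,b_1+i_1,\dots,b_m+i_m;c_1+i_1,\dots,c_m+i_m;x)$.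
   Context: Multi-index notation: for $i=(i_1,\dots,i_m)\in\mathbb Z_{\ge0}^m$, $x^i=x_1^{i_1}\cdots x_m^{i_m}$, $i!=i_1!\cdots i_m!$, $|i|=i_1+\dots+i_m$; similarly for $j\in\mathbb Z_{\ge0}^n$ and $y$. Pochhammer symbol $(\lambda)_k=\Gamma(\lambda+k)/\Gamma(\lambda)$ for every integer $k$; $(b)_i:=\prod_{s=1}^m(b_s)_{i_s}$, $(c)_i:=\prod_{s=1}^m(c_s)_{i_s}$. Lauricella function $F_A^{(m)}(a,b;c;x)=F_A^{(m)}(a,b_1,\dots,b_m;c_1,\dots,c_m;x)=\sum_{i\in\mathbb Z_{\ge0}^m}\frac{(a)_{|i|}(b)_i}{(c)_i}\frac{x^i}{i!}$. Bessel function of $n$ variables $J^{(n)}_\alpha(y)=\sum_{j\in\mathbb Z_{\ge0}^n}\frac{(-1)^{|j|}}{(1+\alpha)_{|j|}}\frac{y^j}{j!}$. Confluent function $\mathrm H_A^{(m,n)}(a,b;c;x,y)=\sum_{i\in\mathbb Z_{\ge0}^m,\,j\in\mathbb Z_{\ge0}^n}\frac{(a)_{|i|-|j|}(b)_i}{(c)_i}\frac{x^i}{i!}\frac{y^j}{j!}$. All functions are regarded as formal power series; the infinite sum converges in the formal (degree) topology. *)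

theory Defs
  imports Complex_Main
begin

text \<open>A formal power series in x=(x_0..x_{m-1}),
y=(y_0..y_{n-1}) is represented by its coefficient function (i,j) |-> coefficient
of x^i y^j; only multi-indices in MI m resp. MI n are meaningful.\<close>

type_synonym mi = "nat \<Rightarrow> nat"
type_synonym ser = "mi \<Rightarrow> mi \<Rightarrow> complex"

definition MI :: "nat \<Rightarrow> mi set" where
  "MI m = {i. \<forall>s\<ge>m. i s = 0}"

definition absi :: "nat \<Rightarrow> mi \<Rightarrow> nat" where
  "absi m i = (\<Sum>s<m. i s)"

definition mfact :: "nat \<Rightarrow> mi \<Rightarrow> complex" where
  "mfact m i = (\<Prod>s<m. fact (i s))"

definition pochv :: "nat \<Rightarrow> (nat \<Rightarrow> complex) \<Rightarrow> mi \<Rightarrow> complex" where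
  "pochv m b i = (\<Prod>s<m. pochhammer (b s) (i s))"

text \<open>Pochhammer symbol with integer index: (lambda)_k = Gamma(lambda+k)/Gamma(lambda).\<close>
definition poch_int :: "complex \<Rightarrow> int \<Rightarrow> complex" where
  "poch_int z k = (if k \<ge> 0 then pochhammer z (nat k)
                   else inverse (pochhammer (z + of_int k) (nat (- k))))"

definition ser_mult :: "ser \<Rightarrow> ser \<Rightarrow> ser" where
  "ser_mult f g = (\<lambda>i j. \<Sum>p \<in> {i'. \<forall>s. i' s \<le> i s} \<times> {j'. \<forall>s. j' s \<le> j s}.
       f (fst p) (snd p) * g (\<lambda>s. i s - fst p s) (\<lambda>s. j s - snd p s))"

definition monom :: "mi \<Rightarrow> mi \<Rightarrow> complex \<Rightarrow> ser" where
  "monom i0 j0 z = (\<lambda>i j. if i = i0 \<and> j = j0 then z else 0)"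

definition ser_eq :: "nat \<Rightarrow> nat \<Rightarrow> ser \<Rightarrow> ser \<Rightarrow> bool" where
  "ser_eq m n f g \<longleftrightarrow> (\<forall>i\<in>MI m. \<forall>j\<in>MI n. f i j = g i j)"

definition ser_sums :: "nat \<Rightarrow> nat \<Rightarrow> (nat \<Rightarrow> ser) \<Rightarrow> ser \<Rightarrow> bool" where
  "ser_sums m n T S \<longleftrightarrow> (\<forall>i\<in>MI m. \<forall>j\<in>MI n. \<exists>N. \<forall>K\<ge>N. (\<Sum>k\<in>{1..K}. T k i j) = S i j)"

definition lauricellaFA :: "nat \<Rightarrow> complex \<Rightarrow> (nat \<Rightarrow> complex) \<Rightarrow> (nat \<Rightarrow> complex) \<Rightarrow> ser" where
  "lauricellaFA m a b c = (\<lambda>i j. if (\<forall>s. j s = 0)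
       then pochhammer a (absi m i) * pochv m b i / pochv m c i / mfact m i else 0)"

definition besselJ :: "nat \<Rightarrow> complex \<Rightarrow> ser" where
  "besselJ n \<alpha> = (\<lambda>i j. if (\<forall>s. i s = 0)
       then (-1) ^ absi n j / pochhammer (1 + \<alpha>) (absi n j) / mfact n j else 0)"

definition confluentHA :: "nat \<Rightarrow> nat \<Rightarrow> complex \<Rightarrow> (nat \<Rightarrow> complex) \<Rightarrow> (nat \<Rightarrow> complex) \<Rightarrow> ser" where
  "confluentHA m n a b c = (\<lambda>i j.
       poch_int a (int (absi m i) - int (absi n j)) * pochv m b i / pochv m c i
       / mfact m i / mfact n j)"

end

theory Submission
  imports Defs "HOL-Computational_Algebra.Formal_Power_Series" "HOL-Library.FuncSet"
begin

lemma poch_nz: fixes a :: complex assumes "a \<notin> \<int>" shows "pochhammer (a + of_int t) k \<noteq> 0"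
proof
  assume "pochhammer (a + of_int t) k = 0"
  then obtain j::nat where "a + of_int t = - of_nat j" by (auto simp: pochhammer_eq_0_iff)
  then have "a = - of_nat j - of_int t" by (metis add_diff_cancel_right')
  then have "a = of_int (- t - int j)" by simp
  then show False using assms by (metis Ints_of_int)
qed

lemma minus_poch_fact: "k \<le> K \<Longrightarrow> pochhammer (- of_nat K :: complex) k = (-1)^k * of_nat (K choose k) * fact k"
proof -
  assume "k \<le> K"
  have "pochhammer (- of_nat K :: complex) k = (-1)^k * pochhammer (of_nat K - of_nat k + 1) k"
    by (simp add: pochhammer_minus)
  moreover have "(of_nat K gchoose k :: complex) = pochhammer (of_nat K - of_nat k + 1) k / fact k"
    by (rule gbinomial_pochhammer')
  moreover have "(of_nat K gchoose k :: complex) = of_nat (K choose k)" by (simp add: binomial_gbinomial)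
  ultimately show ?thesis by (simp add: field_simps)
qed

lemma scalar:
  fixes a :: complex assumes a: "a \<notin> \<int>"
  shows "poch_int a (int K - int L) * pochhammer (1-a) L * (-1)^L
    = (\<Sum>k\<le>K. (-1)^k * of_nat (K choose k) * pochhammer (of_nat L) k * pochhammer (a + of_nat k) (K - k))"
proof -
  have nz: "pochhammer (a + of_int t) k \<noteq> 0" for t k using poch_nz[OF a] .
  have nza: "pochhammer a k \<noteq> 0" for k using nz[of 0] by simp
  have c: "\<forall>i \<in> {0..< K}. a \<noteq> - of_nat i"
  proof
    fix i assume "i \<in> {0..<K}" show "a \<noteq> - of_nat i"
    proof assume "a = - of_nat i" then have "a \<in> \<int>" by simp with a show False by simp qed
  qed
  have V: "(\<Sum>k\<in>{0..K}. (pochhammer (of_nat L) k * pochhammer (- (of_nat K)) k) /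
    (of_nat (fact k) * pochhammer a k)) = pochhammer (a - of_nat L) K / pochhammer a K"
    using Vandermonde_pochhammer[OF c, of "of_nat L"] by simp
  have R: "(\<Sum>k\<le>K. (-1)^k * of_nat (K choose k) * pochhammer (of_nat L) k * pochhammer (a + of_nat k) (K - k))
      = pochhammer a K * (\<Sum>k\<in>{0..K}. (pochhammer (of_nat L) k * pochhammer (- (of_nat K)) k) /
    (of_nat (fact k) * pochhammer a k))"
    unfolding sum_distrib_left atLeast0AtMost
  proof (rule sum.cong[OF refl])
    fix k assume "k \<in> {..K}" then have kK: "k \<le> K" by simp
    have p: "pochhammer a K = pochhammer a k * pochhammer (a + of_nat k) (K - k)"
      using pochhammer_product[OF kK] .
    show "(-1)^k * of_nat (K choose k) * pochhammer (of_nat L) k * pochhammer (a + of_nat k) (K - k) =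
      pochhammer a K * (pochhammer (of_nat L) k * pochhammer (- of_nat K) k / (of_nat (fact k) * pochhammer a k))"
      unfolding p minus_poch_fact[OF kK] using nza[of k]
      by (simp add: field_simps)
  qed
  have R2: "(\<Sum>k\<le>K. (-1)^k * of_nat (K choose k) * pochhammer (of_nat L) k * pochhammer (a + of_nat k) (K - k))
     = pochhammer (a - of_nat L) K" using R V nza[of K] by simp
  have M: "pochhammer (1-a) L * (-1)^L = pochhammer (a - of_nat L) L"
    using pochhammer_minus[of "a - 1" L] by (simp add: algebra_simps)
  show ?thesis
  proof (cases "L \<le> K")
    case True
    have "poch_int a (int K - int L) = pochhammer a (K - L)" unfolding poch_int_def using True
      by (simp add: nat_diff_distrib)
    moreover have "pochhammer (a - of_nat L) K = pochhammer (a - of_nat L) L * pochhammer a (K - L)"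
      using pochhammer_product[OF True, of "a - of_nat L"] by simp
    ultimately show ?thesis using R2 M by (simp add: ac_simps)
  next
    case False
    then have KL: "K \<le> L" by simp
    have e: "poch_int a (int K - int L) = inverse (pochhammer (a + of_nat K - of_nat L) (L - K))"
      unfolding poch_int_def using False by (simp add: nat_diff_distrib algebra_simps)
    have p: "pochhammer (a - of_nat L) L = pochhammer (a - of_nat L) K * pochhammer (a + of_nat K - of_nat L) (L - K)"
      using pochhammer_product[OF KL, of "a - of_nat L"] by (simp add: algebra_simps)
    have nz2: "pochhammer (a + of_nat K - of_nat L) (L - K) \<noteq> 0"
      using nz[of "int K - int L"] by (simp add: algebra_simps)
    show ?thesis unfolding R2 e using M p nz2 by (simp add: field_simps)
  qed
qed

lemma inner_l:
  assumes k: "1 \<le> k"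
  shows "(\<Sum>l\<in>{1..k}. fact k * fact (k-1) / (fact (l-1) * fact (k-l)) * of_nat (L choose l) :: complex)
     = pochhammer (of_nat L) k"
proof -
  have "(\<Sum>l\<in>{1..k}. fact k * fact (k-1) / (fact (l-1) * fact (k-l)) * of_nat (L choose l) :: complex)
     = (\<Sum>l\<in>{1..k}. fact k * of_nat ((L choose l) * ((k-1) choose (k-l))))"
  proof (rule sum.cong[OF refl])
    fix l assume l: "l \<in> {1..k}"
    have "fact (l-1) * fact ((k-1) - (l-1)) * ((k-1) choose (l-1)) = fact (k-1)"
      using l by (intro binomial_fact_lemma) auto
    moreover have "(k-1) - (l-1) = k - l" using l by auto
    moreover have "(k-1) choose (l-1) = (k-1) choose (k-l)"
      using l binomial_symmetric[of "l-1" "k-1"] by auto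
    ultimately have "(fact (k-1) :: complex) = fact (l-1) * fact (k-l) * of_nat ((k-1) choose (k-l))"
      by (metis (mono_tags, lifting) of_nat_fact of_nat_mult)
    then show "fact k * fact (k-1) / (fact (l-1) * fact (k-l)) * of_nat (L choose l) =
         (fact k * of_nat ((L choose l) * ((k-1) choose (k-l))) :: complex)"
      by (simp add: field_simps)
  qed
  also have "\<dots> = fact k * of_nat (\<Sum>l\<le>k. (L choose l) * ((k-1) choose (k-l)))"
  proof -
    have "(\<Sum>l\<le>k. (L choose l) * ((k-1) choose (k-l))) = (\<Sum>l\<in>{1..k}. (L choose l) * ((k-1) choose (k-l)))"
    proof -
      have "{..k} = insert 0 {1..k}" by auto
      then show ?thesis using k by simp
    qed
    then show ?thesis by (simp add: sum_distrib_left)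
  qed
  also have "(\<Sum>l\<le>k. (L choose l) * ((k-1) choose (k-l))) = (L + (k-1)) choose k"
    by (rule vandermonde)
  also have "fact k * of_nat ((L + (k-1)) choose k) = (pochhammer (of_nat L) k :: complex)"
  proof (cases "L = 0")
    case True then show ?thesis using k by (simp add: pochhammer_0_left)
  next
    case False
    have e: "(of_nat (L + (k-1)) - of_nat k + 1 :: complex) = of_nat L" using k by (simp add: of_nat_diff)
    have "(of_nat (L + (k-1)) gchoose k :: complex) = pochhammer (of_nat L) k / fact k"
      using gbinomial_pochhammer'[of "of_nat (L + (k-1)) :: complex" k] unfolding e .
    then show ?thesis by (simp add: binomial_gbinomial del: of_nat_add)
  qed
  finally show ?thesis .
qed

lemma sum_single: "finite A \<Longrightarrow> x \<in> A \<Longrightarrow> (\<And>y. y \<in> A \<Longrightarrow> y \<noteq> x \<Longrightarrow> f y = 0) \<Longrightarrow> sum f A = f x"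
  by (simp add: sum.remove sum.neutral)

lemma box_finite:
  assumes "i \<in> MI m" shows "finite {i'. \<forall>s. i' s \<le> i s}"
proof -
  have "{i'. \<forall>s. i' s \<le> i s} \<subseteq> (\<lambda>g s. if s < m then g s else 0) ` PiE {..<m} (\<lambda>s. {0..i s})"
  proof
    fix f assume f: "f \<in> {i'. \<forall>s. i' s \<le> i s}"
    have "f s = (if s < m then restrict f {..<m} s else 0)" for s
    proof (cases "s < m")
      case False then have "i s = 0" using assms by (simp add: MI_def)
      then show ?thesis using f False by (metis le_zero_eq mem_Collect_eq)
    qed (simp add: restrict_def)
    then have "f = (\<lambda>s. if s < m then restrict f {..<m} s else 0)" by blast
    moreover have "restrict f {..<m} \<in> PiE {..<m} (\<lambda>s. {0..i s})" using f by auto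
    ultimately show "f \<in> (\<lambda>g s. if s < m then g s else 0) ` PiE {..<m} (\<lambda>s. {0..i s})" by blast
  qed
  moreover have "finite (PiE {..<m} (\<lambda>s. {0..i s}))" by (simp add: finite_PiE)
  ultimately show ?thesis by (meson finite_imageI finite_subset)
qed

lemma A_finite: "finite {i'\<in>MI m. absi m i' = k}"
proof -
  let ?b = "\<lambda>s. if s < m then k else 0"
  have "?b \<in> MI m" by (simp add: MI_def)
  moreover have "{i'\<in>MI m. absi m i' = k} \<subseteq> {i'. \<forall>s. i' s \<le> ?b s}"
  proof
    fix i' assume h: "i' \<in> {i'\<in>MI m. absi m i' = k}"
    have "i' s \<le> ?b s" for s
    proof (cases "s < m")
      case True
      have "i' s \<le> (\<Sum>t<m. i' t)" by (rule member_le_sum) (use True in auto)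
      then show ?thesis using h True by (simp add: absi_def)
    next
      case False then show ?thesis using h by (simp add: MI_def)
    qed
    then show "i' \<in> {i'. \<forall>s. i' s \<le> ?b s}" by simp
  qed
  ultimately show ?thesis using box_finite finite_subset by blast
qed

lemma box_MI: "i \<in> MI m \<Longrightarrow> \<forall>s. i' s \<le> i s \<Longrightarrow> i' \<in> MI m"
  unfolding MI_def by (simp add: le_zero_eq) (metis le_zero_eq)

lemma monom_mult:
  assumes "p1 \<in> MI m" "p2 \<in> MI n"
  shows "ser_mult (monom i0 j0 z) F p1 p2 =
    (if (\<forall>s. i0 s \<le> p1 s) \<and> (\<forall>s. j0 s \<le> p2 s) then z * F (\<lambda>s. p1 s - i0 s) (\<lambda>s. p2 s - j0 s) else 0)"
proof -
  have fin: "finite ({i'. \<forall>s. i' s \<le> p1 s} \<times> {j'. \<forall>s. j' s \<le> p2 s})"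
    using box_finite[OF assms(1)] box_finite[OF assms(2)] by simp
  show ?thesis
  proof (cases "(\<forall>s. i0 s \<le> p1 s) \<and> (\<forall>s. j0 s \<le> p2 s)")
    case True
    then show ?thesis unfolding ser_mult_def
      by (subst sum_single[OF fin, of "(i0, j0)"]) (auto simp: monom_def)
  next
    case False
    have "ser_mult (monom i0 j0 z) F p1 p2 = 0" unfolding ser_mult_def
      by (intro sum.neutral) (use False in \<open>auto simp: monom_def\<close>)
    then show ?thesis using False by auto
  qed
qed

lemma triple:
  assumes xonly: "\<And>i j. (\<exists>s. j s \<noteq> 0) \<Longrightarrow> F i j = 0"
    and yonly: "\<And>i j. (\<exists>s. i s \<noteq> 0) \<Longrightarrow> G i j = 0"
    and ij: "i \<in> MI m" "j \<in> MI n"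
  shows "ser_mult (ser_mult (monom i0 j0 z) F) G i j =
    (if (\<forall>s. i0 s \<le> i s) \<and> (\<forall>s. j0 s \<le> j s)
     then z * F (\<lambda>s. i s - i0 s) (\<lambda>_. 0) * G (\<lambda>_. 0) (\<lambda>s. j s - j0 s) else 0)"
proof -
  have fin: "finite ({i'. \<forall>s. i' s \<le> i s} \<times> {j'. \<forall>s. j' s \<le> j s})"
    using box_finite[OF ij(1)] box_finite[OF ij(2)] by simp
  have M: "ser_mult (monom i0 j0 z) F p1 p2 =
    (if (\<forall>s. i0 s \<le> p1 s) \<and> (\<forall>s. j0 s \<le> p2 s) then z * F (\<lambda>s. p1 s - i0 s) (\<lambda>s. p2 s - j0 s) else 0)"
    if "\<forall>s. p1 s \<le> i s" "\<forall>s. p2 s \<le> j s" for p1 p2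
    by (rule monom_mult[OF box_MI[OF ij(1) that(1)] box_MI[OF ij(2) that(2)]])
  have zero: "ser_mult (monom i0 j0 z) F (fst p) (snd p) * G (\<lambda>s. i s - fst p s) (\<lambda>s. j s - snd p s) = 0"
    if p: "p \<in> {i'. \<forall>s. i' s \<le> i s} \<times> {j'. \<forall>s. j' s \<le> j s}" and ne: "p \<noteq> (i, j0)" for p
  proof (cases "fst p = i")
    case False
    then obtain s where "fst p s \<noteq> i s" by blast
    moreover have "fst p s \<le> i s" using p by (auto simp: mem_Times_iff)
    ultimately have "i s - fst p s \<noteq> 0" by simp
    then have "G (\<lambda>s. i s - fst p s) (\<lambda>s. j s - snd p s) = 0" by (intro yonly exI[of _ s]) simp
    then show ?thesis by simp
  next
    case True
    with ne have "snd p \<noteq> j0" by (cases p) auto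
    then obtain s where s: "snd p s \<noteq> j0 s" by blast
    show ?thesis
    proof (cases "(\<forall>s. i0 s \<le> fst p s) \<and> (\<forall>s. j0 s \<le> snd p s)")
      case True
      then have "snd p s - j0 s \<noteq> 0" using s by (metis diff_is_0_eq le_antisym)
      then have "F (\<lambda>s. fst p s - i0 s) (\<lambda>s. snd p s - j0 s) = 0" by (intro xonly exI[of _ s]) simp
      then show ?thesis using M[of "fst p" "snd p"] p True by auto
    next
      case False
      then show ?thesis using M[of "fst p" "snd p"] p by auto
    qed
  qed
  show ?thesis
  proof (cases "(\<forall>s. i0 s \<le> i s) \<and> (\<forall>s. j0 s \<le> j s)")
    case True
    have mem: "(i, j0) \<in> {i'. \<forall>s. i' s \<le> i s} \<times> {j'. \<forall>s. j' s \<le> j s}" using True by auto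
    show ?thesis unfolding ser_mult_def[of "ser_mult _ F"]
      apply (subst sum_single[OF fin mem])
      using zero apply blast
      using True M[of i j0] by simp
  next
    case False
    have "ser_mult (monom i0 j0 z) F (fst p) (snd p) * G (\<lambda>s. i s - fst p s) (\<lambda>s. j s - snd p s) = 0"
      if p: "p \<in> {i'. \<forall>s. i' s \<le> i s} \<times> {j'. \<forall>s. j' s \<le> j s}" for p
    proof (cases "p = (i, j0)")
      case True
      then show ?thesis using False p M[of i j0] by auto
    qed (use zero p in auto)
    then have "ser_mult (ser_mult (monom i0 j0 z) F) G i j = 0" unfolding ser_mult_def[of "ser_mult _ F"]
      by (intro sum.neutral) blast
    then show ?thesis using False by auto
  qed
qed

lemma xy_mult:
  assumes xonly: "\<And>i j. (\<exists>s. j s \<noteq> 0) \<Longrightarrow> F i j = 0"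
    and yonly: "\<And>i j. (\<exists>s. i s \<noteq> 0) \<Longrightarrow> G i j = 0"
    and ij: "i \<in> MI m" "j \<in> MI n"
  shows "ser_mult F G i j = F i (\<lambda>_. 0) * G (\<lambda>_. 0) j"
proof -
  have fin: "finite ({i'. \<forall>s. i' s \<le> i s} \<times> {j'. \<forall>s. j' s \<le> j s})"
    using box_finite[OF ij(1)] box_finite[OF ij(2)] by simp
  have mem: "(i, \<lambda>_. 0) \<in> {i'. \<forall>s. i' s \<le> i s} \<times> {j'. \<forall>s. j' s \<le> j s}" by auto
  have zero: "F (fst p) (snd p) * G (\<lambda>s. i s - fst p s) (\<lambda>s. j s - snd p s) = 0"
    if p: "p \<in> {i'. \<forall>s. i' s \<le> i s} \<times> {j'. \<forall>s. j' s \<le> j s}" and ne: "p \<noteq> (i, \<lambda>_. 0)" for p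
  proof (cases "fst p = i")
    case False
    then obtain s where "fst p s \<noteq> i s" by blast
    moreover have "fst p s \<le> i s" using p by (auto simp: mem_Times_iff)
    ultimately have "i s - fst p s \<noteq> 0" by simp
    then have "G (\<lambda>s. i s - fst p s) (\<lambda>s. j s - snd p s) = 0" by (intro yonly exI[of _ s]) simp
    then show ?thesis by simp
  next
    case True
    with ne have "snd p \<noteq> (\<lambda>_. 0)" by (cases p) auto
    then obtain s where "snd p s \<noteq> 0" by auto
    then have "F (fst p) (snd p) = 0" by (intro xonly exI[of _ s])
    then show ?thesis by simp
  qed
  show ?thesis unfolding ser_mult_def
    apply (subst sum_single[OF fin mem])
    using zero apply blast
    by simp
qed

lemma A_zero: "{i'\<in>MI 0. absi 0 i' = k} = (if k = 0 then {\<lambda>_. 0} else {})"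
  by (auto simp: MI_def absi_def)

lemma multi_vdm: "(\<Sum>i0\<in>{i'\<in>MI m. absi m i' = k}. \<Prod>s<m. (i s choose i0 s)) = absi m i choose k"
proof (induction m arbitrary: k)
  case 0
  then show ?case by (simp only: A_zero) (simp add: absi_def)
next
  case (Suc m)
  let ?A = "\<lambda>m k. {i'\<in>MI m. absi m i' = k}"
  let ?Sig = "Sigma {..k} (\<lambda>t. ?A m (k - t))"
  let ?h = "\<lambda>(t, i'::nat\<Rightarrow>nat). i'(m := t)"
  have inj: "inj_on ?h ?Sig"
  proof (rule inj_onI)
    fix x y assume hx: "x \<in> ?Sig" and hy: "y \<in> ?Sig" and exy: "?h x = ?h y"
    obtain t i' where x: "x = (t, i')" by (cases x)
    obtain t' i'' where y: "y = (t', i'')" by (cases y)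
    from hx hy have h1: "i' \<in> MI m" and h2: "i'' \<in> MI m" using x y by auto
    from exy have e: "i'(m := t) = i''(m := t')" using x y by simp
    have "t = t'" using fun_cong[OF e, of m] by simp
    moreover have "i' = i''"
    proof
      fix s show "i' s = i'' s"
      proof (cases "s = m")
        case True then show ?thesis using h1 h2 by (simp add: MI_def)
      next
        case False then show ?thesis using fun_cong[OF e, of s] by simp
      qed
    qed
    ultimately show "x = y" using x y by simp
  qed
  have absu: "absi (Suc m) (i'(m := t)) = absi m i' + t" for i' t
    unfolding absi_def by simp
  have img: "?h ` ?Sig = ?A (Suc m) k"
  proof
    show "?h ` ?Sig \<subseteq> ?A (Suc m) k"
    proof
      fix x assume "x \<in> ?h ` ?Sig"
      then obtain t i' where ti: "(t, i') \<in> ?Sig" and x: "x = i'(m := t)" by auto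
      then have "t \<le> k" "i' \<in> MI m" "absi m i' = k - t" by auto
      then show "x \<in> ?A (Suc m) k" unfolding x using absu by (auto simp: MI_def)
    qed
  next
    show "?A (Suc m) k \<subseteq> ?h ` ?Sig"
    proof
      fix i0 assume i0: "i0 \<in> ?A (Suc m) k"
      let ?i' = "i0(m := 0)"
      have "?i' \<in> MI m" using i0 by (auto simp: MI_def)
      moreover have "absi m ?i' = absi m i0" unfolding absi_def by simp
      moreover have "absi (Suc m) i0 = absi m i0 + i0 m" unfolding absi_def by simp
      ultimately have "(i0 m, ?i') \<in> ?Sig" using i0 by auto
      moreover have "i0 = ?h (i0 m, ?i')" by simp
      ultimately show "i0 \<in> ?h ` ?Sig" by blast
    qed
  qed
  have fin: "\<forall>t\<in>{..k}. finite (?A m (k - t))" using A_finite by blast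
  have "(\<Sum>i0\<in>?A (Suc m) k. \<Prod>s<Suc m. (i s choose i0 s))
      = (\<Sum>p\<in>?Sig. \<Prod>s<Suc m. (i s choose (?h p) s))"
    unfolding img[symmetric] by (subst sum.reindex[OF inj]) (simp add: case_prod_beta)
  also have "\<dots> = (\<Sum>t\<le>k. \<Sum>i'\<in>?A m (k - t). \<Prod>s<Suc m. (i s choose (i'(m := t)) s))"
    by (subst sum.Sigma[OF _ fin]) (auto simp: case_prod_beta)
  also have "\<dots> = (\<Sum>t\<le>k. (i m choose t) * (\<Sum>i'\<in>?A m (k - t). \<Prod>s<m. (i s choose i' s)))"
    unfolding sum_distrib_left
  proof (intro sum.cong refl)
    fix t i' show "(\<Prod>s<Suc m. (i s choose (i'(m := t)) s)) = (i m choose t) * (\<Prod>s<m. (i s choose i' s))"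
    proof -
      have "(\<Prod>s<m. (i s choose (i'(m := t)) s)) = (\<Prod>s<m. (i s choose i' s))"
        by (rule prod.cong) auto
      then show ?thesis by (simp add: lessThan_Suc mult.commute)
    qed
  qed
  also have "\<dots> = (\<Sum>t\<le>k. (i m choose t) * (absi m i choose (k - t)))" using Suc by simp
  also have "\<dots> = (i m + absi m i) choose k" by (rule vandermonde)
  also have "i m + absi m i = absi (Suc m) i" unfolding absi_def by simp
  finally show ?case .
qed

lemma alg:
  fixes s1 s2 A B0 B1 C0 C1 D PAl PAl' PK M0 M1 N0 N1 U V :: complex
  assumes "M0 \<noteq> 0" "M1 \<noteq> 0" "N0 \<noteq> 0" "N1 \<noteq> 0" "U \<noteq> 0" "V \<noteq> 0"
  shows "s1 * A * B0 / (D * PAl * C0) / (M0 * N0) * (PK * B1 / C1 / M1) * (s2 / PAl' / N1)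
    = (s1 * s2) * (A / D) * PK / (PAl * PAl') * ((B0 * B1) / (C0 * C1) / (M0 * M1 * U) / (N0 * N1 * V)) * U * V"
  using assms by (simp add: divide_inverse inverse_mult_distrib mult_ac) (simp add: field_simps)

lemma pochv_split: "\<forall>s. i0 s \<le> i s \<Longrightarrow>
   pochv m b i0 * pochv m (\<lambda>s. b s + of_nat (i0 s)) (\<lambda>s. i s - i0 s) = pochv m b i"
  unfolding pochv_def prod.distrib[symmetric]
  by (rule prod.cong[OF refl]) (simp add: pochhammer_product[symmetric])

lemma mfact_split: "\<forall>s. i0 s \<le> i s \<Longrightarrow>
   mfact m i0 * mfact m (\<lambda>s. i s - i0 s) * of_nat (\<Prod>s<m. i s choose i0 s) = mfact m i"
  unfolding mfact_def of_nat_prod prod.distrib[symmetric]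
proof (rule prod.cong[OF refl])
  fix s assume "\<forall>s. i0 s \<le> i s"
  then have "fact (i0 s) * fact (i s - i0 s) * (i s choose i0 s) = fact (i s)"
    by (intro binomial_fact_lemma) auto
  then have "(of_nat (fact (i0 s) * fact (i s - i0 s) * (i s choose i0 s)) :: complex) = of_nat (fact (i s))"
    by (simp only:)
  then show "fact (i0 s) * fact (i s - i0 s) * of_nat (i s choose i0 s) = (fact (i s) :: complex)"
    by simp
qed

lemma mfact_nz: "mfact m i \<noteq> 0"
  unfolding mfact_def by simp

lemma absi_diff: "\<forall>s. i0 s \<le> i s \<Longrightarrow> absi m (\<lambda>s. i s - i0 s) = absi m i - absi m i0"
  unfolding absi_def by (rule sum_subtractf_nat) auto

lemma absi_mono: "\<forall>s. i0 s \<le> i s \<Longrightarrow> absi m i0 \<le> absi m i"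
  unfolding absi_def by (rule sum_mono) auto

lemma binprod_zero:
  assumes "i0 \<in> MI m" "\<not> (\<forall>s. i0 s \<le> i s)"
  shows "(\<Prod>s<m. i s choose i0 s) = 0"
proof -
  obtain s where s: "\<not> i0 s \<le> i s" using assms(2) by blast
  have "s < m"
  proof (rule ccontr)
    assume "\<not> s < m" then have "i0 s = 0" using assms(1) by (simp add: MI_def)
    then show False using s by simp
  qed
  moreover have "(i s choose i0 s) = 0" using s by (simp add: binomial_eq_0)
  ultimately show ?thesis by (intro prod_zero) auto
qed

lemma coeff:
  fixes a :: complex and b c :: "nat \<Rightarrow> complex"
  assumes ij: "i \<in> MI m" "j \<in> MI n"
    and i0: "i0 \<in> MI m" "absi m i0 = k" and j0: "j0 \<in> MI n" "absi n j0 = l"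
  shows "ser_mult (ser_mult
           (monom i0 j0
              ((-1) ^ (k + l) * fact k * fact (k - 1) * pochv m b i0
               / (fact (l - 1) * fact (k - l) * pochhammer (1 - a) l * pochv m c i0)
               / (mfact m i0 * mfact n j0)))
           (lauricellaFA m (a + of_nat k) (\<lambda>s. b s + of_nat (i0 s)) (\<lambda>s. c s + of_nat (i0 s))))
           (besselJ n (- a + of_nat l)) i j
    = (-1)^(k + absi n j) * (fact k * fact (k-1) / (fact (l-1) * fact (k-l)))
        * pochhammer (a + of_nat k) (absi m i - k) / pochhammer (1-a) (absi n j)
        * (pochv m b i / pochv m c i / mfact m i / mfact n j)
        * of_nat (\<Prod>s<m. i s choose i0 s) * of_nat (\<Prod>s<n. j s choose j0 s)"
  (is "?L = ?R")
proof -
  have T: "?L = (if (\<forall>s. i0 s \<le> i s) \<and> (\<forall>s. j0 s \<le> j s) then ((-1) ^ (k + l) * fact k * fact (k - 1) * pochv m b i0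
               / (fact (l - 1) * fact (k - l) * pochhammer (1 - a) l * pochv m c i0)
               / (mfact m i0 * mfact n j0)) *
     lauricellaFA m (a + of_nat k) (\<lambda>s. b s + of_nat (i0 s)) (\<lambda>s. c s + of_nat (i0 s)) (\<lambda>s. i s - i0 s) (\<lambda>_. 0)
     * besselJ n (- a + of_nat l) (\<lambda>_. 0) (\<lambda>s. j s - j0 s) else 0)"
    by (rule triple[OF _ _ ij]) (auto simp: lauricellaFA_def besselJ_def)
  show ?thesis
  proof (cases "(\<forall>s. i0 s \<le> i s) \<and> (\<forall>s. j0 s \<le> j s)")
    case False
    then have "(\<Prod>s<m. i s choose i0 s) = 0 \<or> (\<Prod>s<n. j s choose j0 s) = 0"
      using binprod_zero[OF i0(1), of i] binprod_zero[OF j0(1), of j] by (cases "\<forall>s. i0 s \<le> i s") auto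
    then have "?R = 0" by auto
    moreover have "?L = 0" using T False by simp
    ultimately show ?thesis by simp
  next
    case True
    then have le1: "\<forall>s. i0 s \<le> i s" and le2: "\<forall>s. j0 s \<le> j s" by auto
    have kK: "k \<le> absi m i" using absi_mono[OF le1, of m] i0 by simp
    have lL: "l \<le> absi n j" using absi_mono[OF le2, of n] j0 by simp
    have ad1: "absi m (\<lambda>s. i s - i0 s) = absi m i - k" using absi_diff[OF le1, of m] i0 by simp
    have ad2: "absi n (\<lambda>s. j s - j0 s) = absi n j - l" using absi_diff[OF le2, of n] j0 by simp
    have u0: "of_nat (\<Prod>s<m. i s choose i0 s) \<noteq> (0::complex)"
      using le1 by (simp add: prod_zero_iff not_less)
    have v0: "of_nat (\<Prod>s<n. j s choose j0 s) \<noteq> (0::complex)"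
      using le2 by (simp add: prod_zero_iff not_less)
    have pa: "pochhammer (1-a) l * pochhammer (1 + (- a + of_nat l)) (absi n j - l) = pochhammer (1-a) (absi n j)"
      using pochhammer_product[OF lL, of "1-a"] by (simp add: algebra_simps)
    have sg: "((-1)^(k+l) :: complex) * (-1)^(absi n j - l) = (-1)^(k + absi n j)"
      using lL by (simp add: power_add[symmetric])
    have "?L = ((-1) ^ (k + l) * (fact k * fact (k - 1)) * pochv m b i0
               / ((fact (l - 1) * fact (k - l)) * pochhammer (1 - a) l * pochv m c i0)
               / (mfact m i0 * mfact n j0))
         * (pochhammer (a + of_nat k) (absi m i - k) * pochv m (\<lambda>s. b s + of_nat (i0 s)) (\<lambda>s. i s - i0 s)
              / pochv m (\<lambda>s. c s + of_nat (i0 s)) (\<lambda>s. i s - i0 s) / mfact m (\<lambda>s. i s - i0 s))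
         * ((-1) ^ (absi n j - l) / pochhammer (1 + (- a + of_nat l)) (absi n j - l) / mfact n (\<lambda>s. j s - j0 s))"
      unfolding T using True by (simp add: lauricellaFA_def besselJ_def ad1 ad2 mult.assoc)
    also have "\<dots> = ((-1) ^ (k + l) * (-1) ^ (absi n j - l)) * ((fact k * fact (k - 1)) / (fact (l - 1) * fact (k - l)))
       * pochhammer (a + of_nat k) (absi m i - k) / (pochhammer (1 - a) l * pochhammer (1 + (- a + of_nat l)) (absi n j - l))
       * ((pochv m b i0 * pochv m (\<lambda>s. b s + of_nat (i0 s)) (\<lambda>s. i s - i0 s))
          / (pochv m c i0 * pochv m (\<lambda>s. c s + of_nat (i0 s)) (\<lambda>s. i s - i0 s))
          / (mfact m i0 * mfact m (\<lambda>s. i s - i0 s) * of_nat (\<Prod>s<m. i s choose i0 s))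
          / (mfact n j0 * mfact n (\<lambda>s. j s - j0 s) * of_nat (\<Prod>s<n. j s choose j0 s)))
       * of_nat (\<Prod>s<m. i s choose i0 s) * of_nat (\<Prod>s<n. j s choose j0 s)"
      by (rule alg[OF mfact_nz mfact_nz mfact_nz mfact_nz u0 v0])
    also have "\<dots> = ?R"
      unfolding pochv_split[OF le1] mfact_split[OF le1] mfact_split[OF le2] pa sg ..
    finally show ?thesis .
  qed
qed

lemma sum_prod_split:
  "(\<Sum>x\<in>A. \<Sum>y\<in>B. X * f x * g y) = X * (\<Sum>x\<in>A. f x) * (\<Sum>y\<in>B. g y :: complex)"
  by (simp add: sum_distrib_left sum_distrib_right mult_ac)

lemma u_sum: "(\<Sum>i0\<in>{i'\<in>MI m. absi m i' = k}. (of_nat (\<Prod>s<m. i s choose i0 s) :: complex)) = of_nat (absi m i choose k)"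
  by (simp only: of_nat_sum[symmetric] multi_vdm)

lemma Tval:
  fixes a :: complex and b c :: "nat \<Rightarrow> complex"
  assumes ij: "i \<in> MI m" "j \<in> MI n"
  shows "(\<Sum>l\<in>{1..k}. \<Sum>i0\<in>{i'\<in>MI m. absi m i' = k}. \<Sum>j0\<in>{j'\<in>MI n. absi n j' = l}.
         ser_mult (ser_mult
           (monom i0 j0 ((-1) ^ (k + l) * fact k * fact (k - 1) * pochv m b i0
               / (fact (l - 1) * fact (k - l) * pochhammer (1 - a) l * pochv m c i0)
               / (mfact m i0 * mfact n j0)))
           (lauricellaFA m (a + of_nat k) (\<lambda>s. b s + of_nat (i0 s)) (\<lambda>s. c s + of_nat (i0 s))))
           (besselJ n (- a + of_nat l)) i j)
    = (\<Sum>l\<in>{1..k}. ((-1)^(k + absi n j) * (fact k * fact (k-1) / (fact (l-1) * fact (k-l)))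
        * pochhammer (a + of_nat k) (absi m i - k) / pochhammer (1-a) (absi n j)
        * (pochv m b i / pochv m c i / mfact m i / mfact n j))
        * of_nat (absi m i choose k) * of_nat (absi n j choose l))"
proof (rule sum.cong[OF refl])
  fix l assume "l \<in> {1..k}"
  let ?X = "(-1)^(k + absi n j) * (fact k * fact (k-1) / (fact (l-1) * fact (k-l)))
        * pochhammer (a + of_nat k) (absi m i - k) / pochhammer (1-a) (absi n j)
        * (pochv m b i / pochv m c i / mfact m i / mfact n j) :: complex"
  have "(\<Sum>i0\<in>{i'\<in>MI m. absi m i' = k}. \<Sum>j0\<in>{j'\<in>MI n. absi n j' = l}.
         ser_mult (ser_mult
           (monom i0 j0 ((-1) ^ (k + l) * fact k * fact (k - 1) * pochv m b i0
               / (fact (l - 1) * fact (k - l) * pochhammer (1 - a) l * pochv m c i0)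
               / (mfact m i0 * mfact n j0)))
           (lauricellaFA m (a + of_nat k) (\<lambda>s. b s + of_nat (i0 s)) (\<lambda>s. c s + of_nat (i0 s))))
           (besselJ n (- a + of_nat l)) i j)
     = (\<Sum>i0\<in>{i'\<in>MI m. absi m i' = k}. \<Sum>j0\<in>{j'\<in>MI n. absi n j' = l}.
          ?X * of_nat (\<Prod>s<m. i s choose i0 s) * of_nat (\<Prod>s<n. j s choose j0 s))"
    by (intro sum.cong refl coeff[OF ij]) auto
  also have "\<dots> = ?X * of_nat (absi m i choose k) * of_nat (absi n j choose l)"
    unfolding sum_prod_split u_sum ..
  finally show "(\<Sum>i0\<in>{i'\<in>MI m. absi m i' = k}. \<Sum>j0\<in>{j'\<in>MI n. absi n j' = l}.
         ser_mult (ser_mult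
           (monom i0 j0 ((-1) ^ (k + l) * fact k * fact (k - 1) * pochv m b i0
               / (fact (l - 1) * fact (k - l) * pochhammer (1 - a) l * pochv m c i0)
               / (mfact m i0 * mfact n j0)))
           (lauricellaFA m (a + of_nat k) (\<lambda>s. b s + of_nat (i0 s)) (\<lambda>s. c s + of_nat (i0 s))))
           (besselJ n (- a + of_nat l)) i j) = ?X * of_nat (absi m i choose k) * of_nat (absi n j choose l)" .
qed

lemma Tval2:
  fixes a :: complex and b c :: "nat \<Rightarrow> complex"
  assumes "1 \<le> k"
  shows "(\<Sum>l\<in>{1..k}. ((-1)^(k + L) * (fact k * fact (k-1) / (fact (l-1) * fact (k-l)))
        * pochhammer (a + of_nat k) (K - k) / pochhammer (1-a) L * P)
        * of_nat (K choose k) * of_nat (L choose l))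
    = P * (-1)^L / pochhammer (1-a) L * ((-1)^k * of_nat (K choose k) * pochhammer (of_nat L) k * pochhammer (a + of_nat k) (K - k))"
proof -
  have "(\<Sum>l\<in>{1..k}. ((-1)^(k + L) * (fact k * fact (k-1) / (fact (l-1) * fact (k-l)))
        * pochhammer (a + of_nat k) (K - k) / pochhammer (1-a) L * P)
        * of_nat (K choose k) * of_nat (L choose l))
    = ((-1)^(k + L) * pochhammer (a + of_nat k) (K - k) / pochhammer (1-a) L * P * of_nat (K choose k)) *
      (\<Sum>l\<in>{1..k}. fact k * fact (k-1) / (fact (l-1) * fact (k-l)) * of_nat (L choose l))"
    unfolding sum_distrib_left by (rule sum.cong) (simp_all add: mult_ac)
  also have "\<dots> = ((-1)^(k + L) * pochhammer (a + of_nat k) (K - k) / pochhammer (1-a) L * P * of_nat (K choose k)) *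
      pochhammer (of_nat L) k" unfolding inner_l[OF assms] ..
  finally show ?thesis by (simp add: power_add mult_ac)
qed

theorem mainTheorem15:
  fixes m n :: nat and a :: complex and b c :: "nat \<Rightarrow> complex"
  assumes "a \<notin> \<int>"
    and "\<forall>s<m. \<forall>k::nat. c s \<noteq> - of_nat k"
  shows "\<exists>S. ser_sums m n
      (\<lambda>k i j. \<Sum>l\<in>{1..k}. \<Sum>i0\<in>{i'\<in>MI m. absi m i' = k}. \<Sum>j0\<in>{j'\<in>MI n. absi n j' = l}.
         ser_mult (ser_mult
           (monom i0 j0
              ((-1) ^ (k + l) * fact k * fact (k - 1) * pochv m b i0
               / (fact (l - 1) * fact (k - l) * pochhammer (1 - a) l * pochv m c i0)
               / (mfact m i0 * mfact n j0)))
           (lauricellaFA m (a + of_nat k) (\<lambda>s. b s + of_nat (i0 s)) (\<lambda>s. c s + of_nat (i0 s))))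
           (besselJ n (- a + of_nat l)) i j)
      S
    \<and> ser_eq m n (confluentHA m n a b c)
        (\<lambda>i j. ser_mult (lauricellaFA m a b c) (besselJ n (- a)) i j + S i j)"
proof -
  define T where "T = (\<lambda>k i j. \<Sum>l\<in>{1..k}. \<Sum>i0\<in>{i'\<in>MI m. absi m i' = k}. \<Sum>j0\<in>{j'\<in>MI n. absi n j' = l}.
         ser_mult (ser_mult
           (monom i0 j0
              ((-1) ^ (k + l) * fact k * fact (k - 1) * pochv m b i0
               / (fact (l - 1) * fact (k - l) * pochhammer (1 - a) l * pochv m c i0)
               / (mfact m i0 * mfact n j0)))
           (lauricellaFA m (a + of_nat k) (\<lambda>s. b s + of_nat (i0 s)) (\<lambda>s. c s + of_nat (i0 s))))
           (besselJ n (- a + of_nat l)) i j)"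
  define P where "P = (\<lambda>i j. pochv m b i / pochv m c i / mfact m i / mfact n j)"
  define S where "S = (\<lambda>i j. \<Sum>k\<in>{1..absi m i}. T k i j)"
  have Tk: "T k i j = P i j * (-1)^(absi n j) / pochhammer (1-a) (absi n j) *
     ((-1)^k * of_nat (absi m i choose k) * pochhammer (of_nat (absi n j)) k * pochhammer (a + of_nat k) (absi m i - k))"
    if ij: "i \<in> MI m" "j \<in> MI n" and k: "1 \<le> k" for i j k
    unfolding T_def Tval[OF ij] P_def Tval2[OF k, symmetric] by (rule sum.cong) (simp_all add: mult_ac)
  have T0: "T k i j = 0" if ij: "i \<in> MI m" "j \<in> MI n" and k: "absi m i < k" for i j k
    using Tk[OF ij, of k] k by simp
  have sums: "ser_sums m n T S"
    unfolding ser_sums_def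
  proof (intro ballI exI allI impI)
    fix i j K' assume i: "i \<in> MI m" and j: "j \<in> MI n" and K': "absi m i \<le> K'"
    show "(\<Sum>k\<in>{1..K'}. T k i j) = S i j" unfolding S_def
      by (rule sum.mono_neutral_right) (use K' T0[OF i j] in auto)
  qed
  have eq: "ser_eq m n (confluentHA m n a b c) (\<lambda>i j. ser_mult (lauricellaFA m a b c) (besselJ n (- a)) i j + S i j)"
    unfolding ser_eq_def
  proof (intro ballI)
    fix i j assume i: "i \<in> MI m" and j: "j \<in> MI n"
    define K where "K = absi m i"
    define L where "L = absi n j"
    have a1: "1 - a \<notin> \<int>"
    proof
      assume "1 - a \<in> \<int>"
      then have "1 - (1 - a) \<in> \<int>" by (intro Ints_diff) auto
      then show False using assms(1) by simp
    qed
    have nzL: "pochhammer (1 - a) L \<noteq> 0" using poch_nz[OF a1, of 0 L] by simp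
    have FJ: "ser_mult (lauricellaFA m a b c) (besselJ n (- a)) i j
       = pochhammer a K * P i j * (-1)^L / pochhammer (1-a) L"
      by (subst xy_mult[OF _ _ i j]) (auto simp: lauricellaFA_def besselJ_def P_def K_def L_def)
    define W where "W = (\<Sum>k\<in>{1..K}. (-1)^k * of_nat (K choose k) * pochhammer (of_nat L) k * pochhammer (a + of_nat k) (K - k) :: complex)"
    have SW: "S i j = P i j * (-1)^L / pochhammer (1-a) L * W"
      unfolding S_def W_def sum_distrib_left K_def[symmetric] L_def[symmetric]
      by (rule sum.cong) (auto simp: Tk[OF i j] K_def L_def)
    have sc: "poch_int a (int K - int L) * pochhammer (1-a) L * (-1)^L = pochhammer a K + W"
    proof -
      have "{..K} = insert 0 {1..K}" by auto
      then show ?thesis unfolding scalar[OF assms(1)] W_def by simp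
    qed
    have s2: "(-1::complex)^L * (-1)^L = 1" by (simp flip: power_mult_distrib)
    have pi: "poch_int a (int K - int L) = (pochhammer a K + W) * (-1)^L / pochhammer (1-a) L"
    proof -
      have "poch_int a (int K - int L) = poch_int a (int K - int L) * pochhammer (1-a) L * ((-1)^L * (-1)^L) / pochhammer (1-a) L"
        using nzL s2 by simp
      also have "\<dots> = (poch_int a (int K - int L) * pochhammer (1-a) L * (-1)^L) * (-1)^L / pochhammer (1-a) L"
        by (simp add: mult_ac)
      finally show ?thesis unfolding sc .
    qed
    show "confluentHA m n a b c i j = ser_mult (lauricellaFA m a b c) (besselJ n (- a)) i j + S i j"
      unfolding FJ SW confluentHA_def K_def[symmetric] L_def[symmetric] pi
      by (simp add: P_def divide_inverse algebra_simps)
  qed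
  show ?thesis unfolding T_def[symmetric] using sums eq by blast
qed

end
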